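(* For all real numbers $a,b,c,d>0$, \[ \frac{a}{(a^3+63bcd)^{1/3}} + \frac{b}{(63acd+b^3)^{1/3}} + \frac{c}{(63abd+c^3)^{1/3}} + \frac{d}{(63abc+d^3)^{1/3}} \geq 1. \] *)

theory Defs
  imports Complex_Main
begin

end

theory Submission
  imports Defs
begin

lemma amgm3: fixes u v w :: real assumes "u\<ge>0" "v\<ge>0" "w\<ge>0"
  shows "3*u*v*w \<le> u^3+v^3+w^3"
proof -
  have "u^3+v^3+w^3 - 3*u*v*w = (u+v+w)*((u-v)^2+(v-w)^2+(w-u)^2)/2"
    by (simp add: algebra_simps power2_eq_square power3_eq_cube)
  moreover have "(u+v+w)*((u-v)^2+(v-w)^2+(w-u)^2)/2 \<ge> 0" using assms by simp
  ultimately show ?thesis by linarith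
qed

lemma uni: fixes X q :: real assumes "X\<ge>0" "q\<ge>0"
  shows "7*X^5*q^9 \<le> X^14 + 3*X^7*q^7 + 3*q^14"
proof -
  define g where "g = X^12 + 2*X^11*q + 3*X^10*q^2 + 4*X^9*q^3+5*X^8*q^4+6*X^7*q^5+7*X^6*q^6
     +11*X^5*q^7+15*X^4*q^8+12*X^3*q^9+9*X^2*q^10+6*X*q^11+3*q^12"
  have "X^14 + 3*X^7*q^7 + 3*q^14 - 7*X^5*q^9 = (X-q)^2 * g"
    unfolding g_def by algebra
  moreover have "g \<ge> 0" unfolding g_def using assms by simp
  moreover have "(X-q)^2 * g \<ge> 0" using \<open>g \<ge> 0\<close> by simp
  ultimately show ?thesis by linarith
qed

lemma key: fixes x y z w :: real assumes "x>0" "y>0" "z>0" "w>0"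
  shows "x^15*(x^48+63*(y*z*w)^16) \<le> (x^21+y^21+z^21+w^21)^3"
proof -
  define T where "T = y^21+z^21+w^21"
  define p where "p = y*z*w"
  have p0: "p > 0" using assms p_def by simp
  have T1: "3*p^7 \<le> T"
    using amgm3[of "y^7" "z^7" "w^7"] assms unfolding T_def p_def
    by (simp add: power_mult_distrib flip: power_mult)
  have x0: "x^21 \<ge> 0" "x^42 \<ge> 0" using assms by auto
  have e: "(x^21+T)^3 = x^63 + 3*x^42*T + 3*x^21*T^2 + T^3"
    by algebra
  have m1: "3*x^42*(3*p^7) \<le> 3*x^42*T" using T1 x0 by (intro mult_left_mono) auto
  have m2: "3*x^21*(3*p^7)^2 \<le> 3*x^21*T^2" using T1 x0 p0
    by (intro mult_left_mono power_mono) auto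
  have m3: "(3*p^7)^3 \<le> T^3" using T1 p0 by (intro power_mono) auto
  have u: "7*(x^3)^5*p^9 \<le> (x^3)^14 + 3*(x^3)^7*p^7 + 3*p^14"
    using uni[of "x^3" p] assms p0 by simp
  have u2: "p^7*(63*(x^3)^5*p^9) \<le> p^7*(9*((x^3)^14 + 3*(x^3)^7*p^7 + 3*p^14))"
    using u p0 by (intro mult_left_mono) auto
  have "x^15*(x^48+63*p^16) = x^63 + p^7*(63*(x^3)^5*p^9)"
    by algebra
  also have "\<dots> \<le> x^63 + p^7*(9*((x^3)^14 + 3*(x^3)^7*p^7 + 3*p^14))" using u2 by simp
  also have "\<dots> = x^63 + 3*x^42*(3*p^7) + 3*x^21*(3*p^7)^2 + (3*p^7)^3"
    by algebra
  also have "\<dots> \<le> (x^21+T)^3" unfolding e using m1 m2 m3 by linarith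
  finally have "x^15*(x^48+63*p^16) \<le> (x^21+T)^3" .
  thus ?thesis unfolding T_def p_def by (simp only: add.assoc)
qed

lemma term1: fixes a b c d :: real assumes "a>0" "b>0" "c>0" "d>0"
  shows "a powr (21/16) / (a powr (21/16) + b powr (21/16) + c powr (21/16) + d powr (21/16))
     \<le> a / (a^3 + 63*b*c*d) powr (1/3)"
proof -
  define x where "x = a powr (1/16)"
  define y where "y = b powr (1/16)"
  define z where "z = c powr (1/16)"
  define w where "w = d powr (1/16)"
  have pos: "x>0" "y>0" "z>0" "w>0" using assms x_def y_def z_def w_def by auto
  have r16: "(t powr (1/16)) ^ 16 = t" if "t>0" for t :: real
  proof -
    have "(t powr (1/16)) powr (real 16) = (t powr (1/16)) ^ 16" using powr_realpow[of "t powr (1/16)" 16] that by simp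
    moreover have "(t powr (1/16)) powr (real 16) = t" using that by (simp add: powr_powr)
    ultimately show ?thesis by simp
  qed
  have r21: "t powr (21/16) = (t powr (1/16)) ^ 21" if "t>0" for t :: real
  proof -
    have "(t powr (1/16)) powr (real 21) = (t powr (1/16)) ^ 21" using powr_realpow[of "t powr (1/16)" 21] that by simp
    moreover have "(t powr (1/16)) powr (real 21) = t powr (21/16)" using that by (simp add: powr_powr)
    ultimately show ?thesis by simp
  qed
  have ea: "a = x^16" "b = y^16" "c = z^16" "d = w^16"
    using r16[OF assms(1)] r16[OF assms(2)] r16[OF assms(3)] r16[OF assms(4)]
    unfolding x_def y_def z_def w_def by simp_all
  define S where "S = x^21+y^21+z^21+w^21"
  have S0: "S > 0" unfolding S_def using pos by (intro add_pos_pos) auto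
  define D where "D = a^3 + 63*b*c*d"
  have D0: "D > 0" unfolding D_def using assms by (intro add_pos_pos) auto
  have Dp: "D powr (1/3) > 0" using D0 by simp
  have Dc: "(D powr (1/3))^3 = D" using D0 by (simp add: powr_realpow [symmetric] powr_powr)
  have De: "D = x^48 + 63*(y*z*w)^16"
    unfolding D_def ea by (simp add: power_mult_distrib flip: power_mult)
  have "(x^5 * D powr (1/3))^3 = x^15 * D" by (simp add: power_mult_distrib Dc flip: power_mult)
  also have "\<dots> \<le> S^3" unfolding De S_def using key pos by blast
  finally have c3: "(x^5 * D powr (1/3))^3 \<le> S^3" .
  have "x^5 * D powr (1/3) \<le> S"
    using power_le_imp_le_base[of "x^5 * D powr (1/3)" 2 S] S0 c3 by simp
  hence "x^16 * (x^5 * D powr (1/3)) \<le> x^16 * S"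
    using pos by (intro mult_left_mono) auto
  moreover have "x^16 * (x^5 * D powr (1/3)) = x^21 * D powr (1/3)" by algebra
  ultimately have "x^21 * D powr (1/3) \<le> x^16 * S" by simp
  hence "x^21 / S \<le> x^16 / D powr (1/3)" using S0 Dp by (simp add: divide_simps mult.commute)
  moreover have "a powr (21/16) = x^21" "b powr (21/16) = y^21" "c powr (21/16) = z^21"
     "d powr (21/16) = w^21" using r21 assms x_def y_def z_def w_def by auto
  ultimately show ?thesis unfolding S_def D_def using ea(1) by simp
qed

theorem mainTheorem19:
  fixes a b c d :: real
  assumes "a > 0" and "b > 0" and "c > 0" and "d > 0"
  shows "a / (a^3 + 63*b*c*d) powr (1/3) + b / (63*a*c*d + b^3) powr (1/3)
       + c / (63*a*b*d + c^3) powr (1/3) + d / (63*a*b*c + d^3) powr (1/3) \<ge> 1"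
proof -
  let ?A = "a powr (21/16)" and ?B = "b powr (21/16)" and ?C = "c powr (21/16)" and ?D = "d powr (21/16)"
  have S0: "?A+?B+?C+?D > 0" using assms by (intro add_pos_pos) auto
  have t1: "?A/(?A+?B+?C+?D) \<le> a / (a^3 + 63*b*c*d) powr (1/3)" using term1 assms by blast
  have t2: "?B/(?A+?B+?C+?D) \<le> b / (63*a*c*d + b^3) powr (1/3)"
    using term1[of b a c d] assms by (simp only: add_ac mult_ac)
  have t3: "?C/(?A+?B+?C+?D) \<le> c / (63*a*b*d + c^3) powr (1/3)"
    using term1[of c a b d] assms by (simp only: add_ac mult_ac)
  have t4: "?D/(?A+?B+?C+?D) \<le> d / (63*a*b*c + d^3) powr (1/3)"
    using term1[of d a b c] assms by (simp only: add_ac mult_ac)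
  have "?A/(?A+?B+?C+?D) + ?B/(?A+?B+?C+?D) + ?C/(?A+?B+?C+?D) + ?D/(?A+?B+?C+?D) = 1"
    using S0 by (simp add: add_divide_distrib [symmetric])
  thus ?thesis using t1 t2 t3 t4 by linarith
qed

end
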